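(* For every program $p$, at most one of the following holds: $\mathrm{gvar}(p)$ (i.e. $\mathrm{gvar}_x(p)$ for some variable $x$), $\mathrm{uabs}(p)$, $\mathrm{uinert}(p)$. Moreover: (1) if $\mathrm{gvar}_x(p)$ then $\mathrm{unf}(p)=x$; (2) if $\mathrm{uabs}(p)$ then $\mathrm{unf}(p)$ is a value; (3) if $\mathrm{uinert}(p)$ then $\mathrm{unf}(p)$ is a non-variable inert term.
   Context: Terms $t,u ::= x\mid\lambda x.t\mid t\,u$; values $v ::= \lambda x.t$ (variables are not values); environments $E ::= \epsilon\mid E[x\leftarrow t]$; programs $p ::= (t,E)$, with $x$ bound in $E$ and $u$ in $(u,E[x\leftarrow t])$, up to $\alpha$; appended ES bind fresh variables; $(t,E)@[x\leftarrow u]:=(t,E[x\leftarrow u])$. Inert terms $i ::= x\mid i\,f$, fireballs $f ::= v\mid i$, non-variable inert terms $i^{+} ::= i\,f$. Needed variables: $nv(x)=\{x\}$, $nv(\lambda x.t)=\emptyset$, $nv(tu)=nv(t)\cup nv(u)$; $nv((t,\epsilon))=nv(t)$, $nv((t,E[x\leftarrow u]))=nv((t,E))$ if $x\notin nv((t,E))$, else $(nv((t,E))\setminus\{x\})\cup nv(u)$. Applied variables: $an(\lambda x.t)=an(x)=\emptyset$, $an(tu)=\{x\}\cup an(u)$ if $t=x$ variable, else $an(t)\cup an(u)$; $an((t,\epsilon))=an(t)$; $an((t,E[x\leftarrow u]))$ is $an((t,E))$ if $x\notin nv((t,E))$; $(an((t,E))\setminus\{x\})\cup an(u)$ if $x\in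 nv((t,E))$ and ($x\notin an((t,E))$ or $u$ not a variable); $(an((t,E))\setminus\{x\})\cup\{y\}$ if $x\in nv((t,E))$, $x\in an((t,E))$, $u=y$ variable. Unapplied variables: $un(\lambda x.t)=\emptyset$, $un(x)=\{x\}$, $un(tu)=un(u)$ if $t$ variable, else $un(t)\cup un(u)$; $un((t,\epsilon))=un(t)$; $un((t,E[x\leftarrow u]))$ is $un((t,E))$ if $x\notin un((t,E))$ and ($x\notin nv((t,E))$ or $u$ a variable), and $(un((t,E))\setminus\{x\})\cup un(u)$ if $x\in un((t,E))$ or ($x\in nv((t,E))$ and $u$ not a variable). Predicates, inductively. $\mathrm{gvar}_x((x,\epsilon))$; $\mathrm{gvar}_x(p)\Rightarrow\mathrm{gvar}_y(p@[x\leftarrow y])$; $\mathrm{gvar}_x(p)$, $z\neq x$ $\Rightarrow$ $\mathrm{gvar}_x(p@[z\leftarrow t])$. $\mathrm{uabs}((v,\epsilon))$; $\mathrm{gvar}_x(p)\Rightarrow\mathrm{uabs}(p@[x\leftarrow v])$; $\mathrm{uabs}(p)\Rightarrow\mathrm{uabs}(p@[x\leftarrow t])$. $\mathrm{uinert}((i^{+},\epsilon))$; $\mathrm{gvar}_x(p)\Rightarrow\mathrm{uinert}(p@[x\leftarrow i^{+}])$; $\mathrm{uinert}(p)$, $x\in nv(p)$ $\Rightarrow$ $\mathrm{uinert}(p@[x\leftarrow i])$; $\mathrm{uinert}(p)$, $x\in un(p)$, $x\notin an(p)$ $\Rightarrow$ $\mathrm{uinert}(p@[x\leftarrow v])$;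 $\mathrm{uinert}(p)$, $x\notin nv(p)$ $\Rightarrow$ $\mathrm{uinert}(p@[x\leftarrow t])$. Unfolding: $\mathrm{unf}((t,\epsilon)):=t$, $\mathrm{unf}((t,E[x\leftarrow u])):=\mathrm{unf}((t,E))\{x:=u\}$ (capture-avoiding meta-level substitution). *)

theory Defs
  imports Main
begin

datatype trm = Var nat | Lam nat trm | App trm trm

type_synonym var = nat

text \<open>Environments: the HEAD of the list is the LAST (outermost) explicit substitution,
  i.e. the paper's E[x<-t] is represented as (x,t) # E.\<close>
type_synonym env = "(var \<times> trm) list"
type_synonym prog = "trm \<times> env"

definition app_es :: "prog \<Rightarrow> var \<Rightarrow> trm \<Rightarrow> prog" where
  "app_es p x u = (fst p, (x, u) # snd p)"

definition is_val :: "trm \<Rightarrow> bool" where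
  "is_val t \<longleftrightarrow> (\<exists>x b. t = Lam x b)"

definition is_var :: "trm \<Rightarrow> bool" where
  "is_var t \<longleftrightarrow> (\<exists>x. t = Var x)"

inductive inert :: "trm \<Rightarrow> bool" where
  inert_var: "inert (Var x)"
| inert_app: "inert i \<Longrightarrow> is_val f \<or> inert f \<Longrightarrow> inert (App i f)"

definition fireball :: "trm \<Rightarrow> bool" where
  "fireball f \<longleftrightarrow> is_val f \<or> inert f"

text \<open>Non-variable inert terms i+ ::= i f.\<close>
definition inert_plus :: "trm \<Rightarrow> bool" where
  "inert_plus t \<longleftrightarrow> (\<exists>i f. t = App i f \<and> inert i \<and> fireball f)"

primrec fv :: "trm \<Rightarrow> var set" where
  "fv (Var x) = {x}"
| "fv (Lam x t) = fv t - {x}"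
| "fv (App t u) = fv t \<union> fv u"

primrec bv :: "trm \<Rightarrow> var set" where
  "bv (Var x) = {}"
| "bv (Lam x t) = insert x (bv t)"
| "bv (App t u) = bv t \<union> bv u"

primrec vars :: "trm \<Rightarrow> var set" where
  "vars (Var x) = {x}"
| "vars (Lam x t) = insert x (vars t)"
| "vars (App t u) = vars t \<union> vars u"

definition swapv :: "var \<Rightarrow> var \<Rightarrow> var \<Rightarrow> var" where
  "swapv a b z = (if z = a then b else if z = b then a else z)"

primrec perm :: "var \<Rightarrow> var \<Rightarrow> trm \<Rightarrow> trm" where
  "perm a b (Var z) = Var (swapv a b z)"
| "perm a b (Lam z t) = Lam (swapv a b z) (perm a b t)"
| "perm a b (App t u) = App (perm a b t) (perm a b u)"

lemma size_perm[simp]: "size (perm a b t) = size t"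
  by (induction t) auto

definition fresh_for :: "var set \<Rightarrow> var" where
  "fresh_for S = (SOME z. z \<notin> S)"

function subst :: "trm \<Rightarrow> var \<Rightarrow> trm \<Rightarrow> trm" where
  "subst (Var y) x u = (if y = x then u else Var y)"
| "subst (App t1 t2) x u = App (subst t1 x u) (subst t2 x u)"
| "subst (Lam y t) x u =
     (if y = x then Lam y t
      else if y \<notin> fv u then Lam y (subst t x u)
      else (let z = fresh_for (vars t \<union> fv u \<union> {x, y})
            in Lam z (subst (perm y z t) x u)))"
  by pat_completeness auto
termination
  by (relation "measure (\<lambda>(t, x, u). size t)") auto

fun bvp :: "prog \<Rightarrow> var set" where
  "bvp (t, []) = bv t"
| "bvp (t, (x, u) # E) = insert x (bv u \<union> bvp (t, E))"

text \<open>Appended explicit substitutions bind fresh variables.\<close>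
definition fresh :: "var \<Rightarrow> prog \<Rightarrow> bool" where
  "fresh x p \<longleftrightarrow> x \<notin> bvp p"

fun unf :: "prog \<Rightarrow> trm" where
  "unf (t, []) = t"
| "unf (t, (x, u) # E) = subst (unf (t, E)) x u"

primrec nv :: "trm \<Rightarrow> var set" where
  "nv (Var x) = {x}"
| "nv (Lam x t) = {}"
| "nv (App t u) = nv t \<union> nv u"

fun nvp :: "prog \<Rightarrow> var set" where
  "nvp (t, []) = nv t"
| "nvp (t, (x, u) # E) =
     (if x \<notin> nvp (t, E) then nvp (t, E) else (nvp (t, E) - {x}) \<union> nv u)"

fun an :: "trm \<Rightarrow> var set" where
  "an (Var x) = {}"
| "an (Lam x t) = {}"
| "an (App (Var x) u) = insert x (an u)"
| "an (App t u) = an t \<union> an u"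

fun anp :: "prog \<Rightarrow> var set" where
  "anp (t, []) = an t"
| "anp (t, (x, u) # E) =
     (if x \<notin> nvp (t, E) then anp (t, E)
      else if x \<notin> anp (t, E) \<or> \<not> is_var u then (anp (t, E) - {x}) \<union> an u
      else (anp (t, E) - {x}) \<union> {THE y. u = Var y})"

fun un :: "trm \<Rightarrow> var set" where
  "un (Var x) = {x}"
| "un (Lam x t) = {}"
| "un (App (Var x) u) = un u"
| "un (App t u) = un t \<union> un u"

fun unp :: "prog \<Rightarrow> var set" where
  "unp (t, []) = un t"
| "unp (t, (x, u) # E) =
     (if x \<notin> unp (t, E) \<and> (x \<notin> nvp (t, E) \<or> is_var u) then unp (t, E)
      else (unp (t, E) - {x}) \<union> un u)"

inductive gvar :: "var \<Rightarrow> prog \<Rightarrow> bool" where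
  gvar_base: "gvar x (Var x, [])"
| gvar_ren: "gvar x p \<Longrightarrow> fresh x p \<Longrightarrow> gvar y (app_es p x (Var y))"
| gvar_skip: "gvar x p \<Longrightarrow> z \<noteq> x \<Longrightarrow> fresh z p \<Longrightarrow> gvar x (app_es p z t)"

inductive uabs :: "prog \<Rightarrow> bool" where
  uabs_base: "is_val v \<Longrightarrow> uabs (v, [])"
| uabs_gvar: "gvar x p \<Longrightarrow> is_val v \<Longrightarrow> fresh x p \<Longrightarrow> uabs (app_es p x v)"
| uabs_skip: "uabs p \<Longrightarrow> fresh x p \<Longrightarrow> uabs (app_es p x t)"

inductive uinert :: "prog \<Rightarrow> bool" where
  uinert_base: "inert_plus i \<Longrightarrow> uinert (i, [])"
| uinert_gvar: "gvar x p \<Longrightarrow> inert_plus i \<Longrightarrow> fresh x p \<Longrightarrow> uinert (app_es p x i)"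
| uinert_inert: "uinert p \<Longrightarrow> x \<in> nvp p \<Longrightarrow> inert i \<Longrightarrow> fresh x p \<Longrightarrow> uinert (app_es p x i)"
| uinert_val: "uinert p \<Longrightarrow> x \<in> unp p \<Longrightarrow> x \<notin> anp p \<Longrightarrow> is_val v \<Longrightarrow> fresh x p
     \<Longrightarrow> uinert (app_es p x v)"
| uinert_skip: "uinert p \<Longrightarrow> x \<notin> nvp p \<Longrightarrow> fresh x p \<Longrightarrow> uinert (app_es p x t)"

end

theory Submission
  imports Defs
begin

lemma subst_Lam_ex: "\<exists>z b. subst (Lam y t) x u = Lam z b"
  by (auto simp: Let_def)

lemma nv_subst: "nv (subst s x u) = (if x \<in> nv s then (nv s - {x}) \<union> nv u else nv s)"
  by (induction s) (auto simp: Let_def)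

lemma an_sub_nv: "an s \<subseteq> nv s"
  by (induction s rule: an.induct) auto

lemma an_App: "an (App t w) = (if is_var t then nv t else an t) \<union> an w"
  by (cases t) (auto simp: is_var_def)

lemma an_subst: "an (subst s x u) = (if x \<notin> nv s then an s else if x \<notin> an s \<or> \<not> is_var u
   then (an s - {x}) \<union> an u else (an s - {x}) \<union> {THE y. u = Var y})"
proof (induction s)
  case (Var y)
  then show ?case by auto
next
  case (Lam y t)
  obtain z b where "subst (Lam y t) x u = Lam z b" using subst_Lam_ex by blast
  then show ?case by simp
next
  case (App s1 s2)
  have e: "subst (App s1 s2) x u = App (subst s1 x u) (subst s2 x u)" by simp
  have s2: "an s2 \<subseteq> nv s2" by (rule an_sub_nv)
  have s1: "an s1 \<subseteq> nv s1" by (rule an_sub_nv)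
  show ?case
  proof (cases "is_var s1")
    case True
    then obtain y where y: "s1 = Var y" by (auto simp: is_var_def)
    show ?thesis
    proof (cases "y = x")
      case True
      then show ?thesis using App y s2 unfolding e an_App
        by (auto simp: is_var_def nv_subst dest: subsetD[OF an_sub_nv])
    next
      case False
      then show ?thesis using App y s2 unfolding e an_App
        by (auto simp: is_var_def nv_subst)
    qed
  next
    case False
    have nv1: "\<not> is_var (subst s1 x u)" using False
      by (cases s1) (auto simp: is_var_def Let_def)
    show ?thesis using App s1 s2 False nv1 unfolding e an_App
      by (auto simp: is_var_def nv_subst)
  qed
qed

lemma nvp_unf: "nvp p = nv (unf p)"
proof -
  obtain t E where p: "p = (t, E)" by (cases p)
  have "nvp (t, E) = nv (unf (t, E))"
    by (induction E) (auto simp: nv_subst)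
  then show ?thesis using p by simp
qed

lemma anp_unf: "anp p = an (unf p)"
proof -
  obtain t E where p: "p = (t, E)" by (cases p)
  have "anp (t, E) = an (unf (t, E)) \<and> nvp (t, E) = nv (unf (t, E))"
    by (induction E) (auto simp: an_subst nv_subst nvp_unf)
  then show ?thesis using p by simp
qed

lemma unf_app_es: "unf (app_es p x u) = subst (unf p) x u"
  by (cases p) (simp add: app_es_def)

lemma gvar_unf: "gvar x p \<Longrightarrow> unf p = Var x"
  by (induction rule: gvar.induct) (auto simp: unf_app_es)

lemma val_subst: "is_val v \<Longrightarrow> is_val (subst v x u)"
  using subst_Lam_ex by (auto simp: is_val_def)

lemma uabs_unf: "uabs p \<Longrightarrow> is_val (unf p)"
  by (induction rule: uabs.induct) (auto simp: unf_app_es gvar_unf val_subst)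

lemma inert_plus_iff: "inert_plus t \<longleftrightarrow> inert t \<and> (\<exists>a b. t = App a b)"
  by (auto simp: inert_plus_def fireball_def elim: inert.cases intro: inert.intros)

lemma fb_App: "fireball (App a b) \<Longrightarrow> inert (App a b)"
  by (auto simp: fireball_def is_val_def)

lemma inert_subst_inert: "inert s \<Longrightarrow> inert i \<Longrightarrow> inert (subst s x i)"
proof (induction rule: inert.induct)
  case (inert_var y) then show ?case by (auto intro: inert.intros)
next
  case (inert_app a f)
  then show ?case using val_subst by (auto intro: inert.intros)
qed

lemma inert_subst_skip: "inert s \<Longrightarrow> x \<notin> nv s \<Longrightarrow> inert (subst s x t)"
proof (induction rule: inert.induct)
  case (inert_var y) then show ?case by (auto intro: inert.intros)
next
  case (inert_app a f)
  then show ?case using val_subst by (auto intro: inert.intros)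
qed

lemma inert_subst_val: "inert s \<Longrightarrow> x \<notin> an s \<Longrightarrow> is_val v \<Longrightarrow> fireball (subst s x v)"
proof (induction rule: inert.induct)
  case (inert_var y) then show ?case by (auto simp: fireball_def intro: inert.intros)
next
  case (inert_app a f)
  have sa: "an a \<subseteq> an (App a f)" "an f \<subseteq> an (App a f)"
    by (auto simp: an_App is_var_def)
  have ia: "inert (subst a x v)"
  proof (cases a)
    case (Var y)
    then have "y \<noteq> x" using inert_app by simp
    then show ?thesis using Var by (auto intro: inert.intros)
  next
    case (Lam y b) then show ?thesis using inert_app by (auto elim: inert.cases)
  next
    case (App a1 a2)
    then have "fireball (subst a x v)" using inert_app sa by auto
    then show ?thesis using App fb_App by simp
  qed
  have "fireball (subst f x v)"
    using inert_app sa val_subst by (auto simp: fireball_def)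
  then show ?case using ia by (auto simp: fireball_def intro: inert.intros)
qed

lemma uinert_unf: "uinert p \<Longrightarrow> inert_plus (unf p)"
proof (induction rule: uinert.induct)
  case (uinert_base i) then show ?case by simp
next
  case (uinert_gvar x p i) then show ?case by (simp add: unf_app_es gvar_unf)
next
  case (uinert_inert p x i)
  then obtain a b where ab: "unf p = App a b" "inert (unf p)" by (auto simp: inert_plus_iff)
  have "inert (subst (unf p) x i)" using ab uinert_inert inert_subst_inert by blast
  then show ?case using ab by (simp add: unf_app_es inert_plus_iff)
next
  case (uinert_val p x v)
  then obtain a b where ab: "unf p = App a b" "inert (unf p)" by (auto simp: inert_plus_iff)
  have "fireball (subst (unf p) x v)" using ab uinert_val inert_subst_val anp_unf by metis
  then have "inert (subst (unf p) x v)" using ab fb_App by simp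
  then show ?case using ab by (simp add: unf_app_es inert_plus_iff)
next
  case (uinert_skip p x t)
  then obtain a b where ab: "unf p = App a b" "inert (unf p)" by (auto simp: inert_plus_iff)
  have "inert (subst (unf p) x t)" using ab uinert_skip inert_subst_skip nvp_unf by metis
  then show ?case using ab by (simp add: unf_app_es inert_plus_iff)
qed

theorem mainTheorem7:
  fixes p :: prog
  shows "\<not> ((\<exists>x. gvar x p) \<and> uabs p) \<and> \<not> ((\<exists>x. gvar x p) \<and> uinert p) \<and> \<not> (uabs p \<and> uinert p)
    \<and> (\<forall>x. gvar x p \<longrightarrow> unf p = Var x)
    \<and> (uabs p \<longrightarrow> is_val (unf p))
    \<and> (uinert p \<longrightarrow> inert_plus (unf p))"
  using gvar_unf uabs_unf uinert_unf
  by (metis inert_plus_def is_val_def trm.distinct)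

end
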